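(* Let $R=\mathbb{Z}[a]$ and $\Gamma$ be as below. For left $\Gamma$-modules $M,N$, the $R$-module $M\otimes_R N$ carries a well-defined left $\Gamma$-module structure extending its $R$-module structure, determined by \begin{align*} Q_0(x\otimes y) &= Q_0x\otimes Q_0y + 2\,Q_1x\otimes Q_2y+2\,Q_2x\otimes Q_1y,\\ Q_1(x\otimes y) &= Q_0x\otimes Q_1y + Q_1x\otimes Q_0y + a\,Q_1x\otimes Q_2y +a\, Q_2x\otimes Q_1y +2\, Q_2x\otimes Q_2y,\\ Q_2(x\otimes y) &= Q_0x\otimes Q_2y+Q_2x\otimes Q_0y+Q_1x\otimes Q_1y + a\, Q_2x\otimes Q_2y. \end{align*} With this tensor product and unit object $R$ (with its standard $\Gamma$-module structure, given by the $R$-module structure of $R$ together with $Q_0\cdot 1=1$, $Q_1\cdot 1=0$, $Q_2\cdot 1=0$), the category of left $\Gamma$-modules is a symmetric monoidal category. Moreover, for the element $\Psi = Q_0Q_0 +a\,Q_0Q_1 -2\,Q_1Q_1 +a^2\,Q_0Q_2 -2a\,Q_1Q_2 +4\,Q_2Q_2$ one has $\Psi(x\otimes y)=\Psi x\otimes \Psi y$ for all $x\in M$, $y\in N$.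
   Context: $R=\mathbb{Z}[a]$ is a polynomial ring. $\Gamma$ is the associative ring equipped with a ring homomorphism $\eta\colon R\to\Gamma$, generated over $R$ by $Q_0,Q_1,Q_2$ subject to: (i) commutation relations: the $Q_i$ commute with elements of $\mathbb{Z}\subset R$, and $Q_0\,a = a^2Q_0-2aQ_1+6Q_2$, $Q_1\,a=3Q_0+aQ_2$, $Q_2\,a=-aQ_0+3Q_1$; (ii) adem relations: $Q_1Q_0=2Q_2Q_1-2Q_0Q_2$ and $Q_2Q_0=Q_0Q_1+aQ_0Q_2-2Q_1Q_2$. A $\Gamma$-module means a left $\Gamma$-module; it is an $R$-module via $\eta$. The standard $\Gamma$-module structure on $R$ is the unique one extending the $R$-module structure of $R$ with $Q_0\cdot1=1$, $Q_1\cdot 1=Q_2\cdot 1=0$. *)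

theory Defs
  imports "HOL-Computational_Algebra.Polynomial"
begin

text \<open>Modules over R = Z[a] are abelian groups with an additive endomorphism
(the action of a).\<close>

record 'm gstr =
  act_a :: "'m \<Rightarrow> 'm"
  q0 :: "'m \<Rightarrow> 'm"
  q1 :: "'m \<Rightarrow> 'm"
  q2 :: "'m \<Rightarrow> 'm"

definition additive :: "('a::ab_group_add \<Rightarrow> 'b::ab_group_add) \<Rightarrow> bool" where
  "additive f \<longleftrightarrow> (\<forall>x y. f (x + y) = f x + f y)"

definition zsc :: "int \<Rightarrow> 'a::ab_group_add \<Rightarrow> 'a" where
  "zsc k x = (if 0 \<le> k then (\<Sum>i<nat k. x) else - (\<Sum>i<nat (- k). x))"

definition polyact :: "('m::ab_group_add \<Rightarrow> 'm) \<Rightarrow> int poly \<Rightarrow> 'm \<Rightarrow> 'm" where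
  "polyact A r x = (\<Sum>i\<le>degree r. zsc (coeff r i) ((A ^^ i) x))"

definition gmod :: "'m::ab_group_add gstr \<Rightarrow> bool" where
  "gmod G \<longleftrightarrow> additive (act_a G) \<and> additive (q0 G) \<and> additive (q1 G) \<and> additive (q2 G) \<and>
    (\<forall>x. q0 G (act_a G x) = act_a G (act_a G (q0 G x)) - zsc 2 (act_a G (q1 G x)) + zsc 6 (q2 G x)) \<and>
    (\<forall>x. q1 G (act_a G x) = zsc 3 (q0 G x) + act_a G (q2 G x)) \<and>
    (\<forall>x. q2 G (act_a G x) = - act_a G (q0 G x) + zsc 3 (q1 G x)) \<and>
    (\<forall>x. q1 G (q0 G x) = zsc 2 (q2 G (q1 G x)) - zsc 2 (q0 G (q2 G x))) \<and>
    (\<forall>x. q2 G (q0 G x) = q0 G (q1 G x) + act_a G (q0 G (q2 G x)) - zsc 2 (q1 G (q2 G x)))"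

definition glin :: "'m::ab_group_add gstr \<Rightarrow> 'n::ab_group_add gstr \<Rightarrow> ('m \<Rightarrow> 'n) \<Rightarrow> bool" where
  "glin G H f \<longleftrightarrow> additive f \<and>
    (\<forall>x. f (act_a G x) = act_a H (f x)) \<and> (\<forall>x. f (q0 G x) = q0 H (f x)) \<and>
    (\<forall>x. f (q1 G x) = q1 H (f x)) \<and> (\<forall>x. f (q2 G x) = q2 H (f x))"

text \<open>The tensor product over R, via its standard construction: the free abelian group
on pairs modulo the subgroup generated by biadditivity and a-balancing relations.\<close>

definition delta :: "'a \<Rightarrow> 'a \<Rightarrow> int" where
  "delta p q = (if q = p then 1 else 0)"

inductive_set tens_rel :: "('m::ab_group_add \<Rightarrow> 'm) \<Rightarrow> ('n::ab_group_add \<Rightarrow> 'n) \<Rightarrow> ('m \<times> 'n \<Rightarrow> int) set"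
  for AM AN where
  zero: "(\<lambda>_. 0) \<in> tens_rel AM AN"
| add: "s \<in> tens_rel AM AN \<Longrightarrow> t \<in> tens_rel AM AN \<Longrightarrow> (\<lambda>p. s p + t p) \<in> tens_rel AM AN"
| neg: "s \<in> tens_rel AM AN \<Longrightarrow> (\<lambda>p. - s p) \<in> tens_rel AM AN"
| addl: "(\<lambda>p. delta (x + x', y) p - delta (x, y) p - delta (x', y) p) \<in> tens_rel AM AN"
| addr: "(\<lambda>p. delta (x, y + y') p - delta (x, y) p - delta (x, y') p) \<in> tens_rel AM AN"
| bal: "(\<lambda>p. delta (AM x, y) p - delta (x, AN y) p) \<in> tens_rel AM AN"

definition fsupp :: "('a \<Rightarrow> int) \<Rightarrow> bool" where
  "fsupp s \<longleftrightarrow> finite {p. s p \<noteq> 0}"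

definition teval :: "('m \<Rightarrow> 'n \<Rightarrow> 't::ab_group_add) \<Rightarrow> ('m \<times> 'n \<Rightarrow> int) \<Rightarrow> 't" where
  "teval tp s = (\<Sum>p\<in>{p. s p \<noteq> 0}. zsc (s p) (tp (fst p) (snd p)))"

definition is_tensor :: "('m::ab_group_add \<Rightarrow> 'm) \<Rightarrow> ('n::ab_group_add \<Rightarrow> 'n) \<Rightarrow> ('t::ab_group_add \<Rightarrow> 't)
    \<Rightarrow> ('m \<Rightarrow> 'n \<Rightarrow> 't) \<Rightarrow> bool" where
  "is_tensor AM AN AT tp \<longleftrightarrow> additive AT \<and>
    (\<forall>x x' y. tp (x + x') y = tp x y + tp x' y) \<and>
    (\<forall>x y y'. tp x (y + y') = tp x y + tp x y') \<and>
    (\<forall>x y. tp (AM x) y = AT (tp x y)) \<and> (\<forall>x y. tp x (AN y) = AT (tp x y)) \<and>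
    (\<forall>z. \<exists>s. fsupp s \<and> z = teval tp s) \<and>
    (\<forall>s. fsupp s \<longrightarrow> (teval tp s = 0 \<longleftrightarrow> s \<in> tens_rel AM AN))"

definition gtensor :: "'m::ab_group_add gstr \<Rightarrow> 'n::ab_group_add gstr \<Rightarrow> ('m \<Rightarrow> 'n \<Rightarrow> 't::ab_group_add)
    \<Rightarrow> 't gstr \<Rightarrow> bool" where
  "gtensor M N tp T \<longleftrightarrow> is_tensor (act_a M) (act_a N) (act_a T) tp \<and>
    additive (q0 T) \<and> additive (q1 T) \<and> additive (q2 T) \<and>
    (\<forall>x y. q0 T (tp x y) = tp (q0 M x) (q0 N y) + zsc 2 (tp (q1 M x) (q2 N y))
                          + zsc 2 (tp (q2 M x) (q1 N y))) \<and>
    (\<forall>x y. q1 T (tp x y) = tp (q0 M x) (q1 N y) + tp (q1 M x) (q0 N y)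
                          + act_a T (tp (q1 M x) (q2 N y)) + act_a T (tp (q2 M x) (q1 N y))
                          + zsc 2 (tp (q2 M x) (q2 N y))) \<and>
    (\<forall>x y. q2 T (tp x y) = tp (q0 M x) (q2 N y) + tp (q2 M x) (q0 N y)
                          + tp (q1 M x) (q1 N y) + act_a T (tp (q2 M x) (q2 N y)))"

definition std_unit :: "int poly gstr \<Rightarrow> bool" where
  "std_unit U \<longleftrightarrow> gmod U \<and> act_a U = (\<lambda>r. [:0, 1:] * r) \<and>
     q0 U 1 = 1 \<and> q1 U 1 = 0 \<and> q2 U 1 = 0"

definition psi :: "'m::ab_group_add gstr \<Rightarrow> 'm \<Rightarrow> 'm" where
  "psi G x = q0 G (q0 G x) + act_a G (q0 G (q1 G x)) - zsc 2 (q1 G (q1 G x))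
     + act_a G (act_a G (q0 G (q2 G x))) - zsc 2 (act_a G (q1 G (q2 G x)))
     + zsc 4 (q2 G (q2 G x))"

end

theory Submission
  imports Defs
begin


lemma zsc_nat: "zsc (int n) x = (\<Sum>i<n. x)"
  by (simp add: zsc_def)

lemma zsc_0[simp]: "zsc 0 x = 0" by (simp add: zsc_def)

lemma zsc_succ: "zsc (k + 1) x = zsc k x + x"
proof (cases "0 \<le> k")
  case True
  define n where "n = nat k"
  have n: "k = int n" using True unfolding n_def by simp
  have "k + 1 = int (Suc n)" using n by simp
  then show ?thesis using n by (simp only: zsc_nat sum.lessThan_Suc)
next
  case False
  define n where "n = nat (- k - 1)"
  have n: "k = - int (Suc n)" using False unfolding n_def by simp
  show ?thesis
  proof (cases n)
    case 0 then show ?thesis using n by (simp add: zsc_def)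
  next
    case (Suc m)
    have a: "k + 1 = - int (Suc m)" using n Suc by simp
    have e1: "nat (-k) = Suc n" using n by simp
    have e2: "nat (-(k+1)) = n" using a Suc by simp
    have "zsc k x = - (\<Sum>i<nat (-k). x)" using False by (simp add: zsc_def)
    hence z1: "zsc k x = - (\<Sum>i<Suc n. x)" by (simp only: e1)
    have "zsc (k+1) x = - (\<Sum>i<nat (-(k+1)). x)" using a by (simp add: zsc_def)
    hence z2: "zsc (k+1) x = - (\<Sum>i<n. x)" by (simp only: e2)
    show ?thesis unfolding z1 z2 by (simp add: sum.lessThan_Suc)
  qed
qed

lemma zsc_pred: "zsc (k - 1) x = zsc k x - x"
  using zsc_succ[of "k - 1" x] by simp

lemma zsc_add: "zsc (k + l) x = zsc k x + zsc l x"
proof (induct l rule: int_induct[where k=0])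
  case base then show ?case by simp
next
  case (step1 i)
  have "zsc (k + (i + 1)) x = zsc ((k + i) + 1) x" by (simp only: add.assoc)
  also have "\<dots> = zsc (k + i) x + x" by (rule zsc_succ)
  also have "\<dots> = zsc k x + (zsc i x + x)" by (simp only: step1(2) add.assoc)
  also have "\<dots> = zsc k x + zsc (i + 1) x" by (simp only: zsc_succ)
  finally show ?case .
next
  case (step2 i)
  have "zsc (k + (i - 1)) x = zsc ((k + i) - 1) x" by (simp only: add_diff_eq)
  also have "\<dots> = zsc (k + i) x - x" by (rule zsc_pred)
  also have "\<dots> = zsc k x + (zsc i x - x)" by (simp only: step2(2) add_diff_eq)
  also have "\<dots> = zsc k x + zsc (i - 1) x" by (simp only: zsc_pred)
  finally show ?case .
qed

lemma zsc_1[simp]: "zsc 1 x = x" using zsc_succ[of 0 x] by simp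

lemma zsc_neg: "zsc (- k) x = - zsc k x"
  using zsc_add[of k "-k" x] by (simp add: eq_neg_iff_add_eq_0 add.commute)

lemma zsc_diff: "zsc (k - l) x = zsc k x - zsc l x"
  using zsc_add[of k "-l" x] zsc_neg[of l x] by simp

lemma zsc_zero_right[simp]: "zsc k 0 = 0"
  by (induct k rule: int_induct[where k=0]) (simp_all add: zsc_succ zsc_pred)

lemma zsc_plus: "zsc k (x + y) = zsc k x + zsc k y"
  by (induct k rule: int_induct[where k=0]) (simp_all add: zsc_succ zsc_pred algebra_simps)

lemma additive_add: "additive f \<Longrightarrow> f (x + y) = f x + f y"
  unfolding additive_def by blast
lemma additive_0: "additive f \<Longrightarrow> f 0 = 0"
proof -
  assume a: "additive f"
  have "f 0 = f (0 + 0)" by simp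
  also have "\<dots> = f 0 + f 0" by (rule additive_add[OF a])
  finally show ?thesis by simp
qed
lemma additive_neg: "additive f \<Longrightarrow> f (- x) = - f x"
proof -
  assume a: "additive f"
  have "f (- x) + f x = f (- x + x)" by (rule additive_add[OF a, symmetric])
  also have "\<dots> = 0" using additive_0[OF a] by simp
  finally show ?thesis by (simp add: eq_neg_iff_add_eq_0)
qed
lemma additive_diff: "additive f \<Longrightarrow> f (x - y) = f x - f y"
  by (simp only: diff_conv_add_uminus additive_add additive_neg)

lemma additive_zsc: assumes a: "additive f" shows "f (zsc k x) = zsc k (f x)"
proof (induct k rule: int_induct[where k=0])
  case base then show ?case using additive_0[OF a] by simp
next
  case (step1 i) then show ?case by (simp only: zsc_succ additive_add[OF a])
next
  case (step2 i) then show ?case by (simp only: zsc_pred additive_diff[OF a])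
qed

lemma zsc_mult: "zsc (k * l) x = zsc k (zsc l x)"
  by (induct k rule: int_induct[where k=0]) (simp_all add: zsc_succ zsc_pred algebra_simps zsc_add zsc_diff)

lemma zsc_uminus: "zsc k (- x) = - zsc k x"
  by (induct k rule: int_induct[where k=0]) (simp_all add: zsc_succ zsc_pred algebra_simps)

lemma zsc_minus: "zsc k (x - y) = zsc k x - zsc k y"
  by (simp only: diff_conv_add_uminus zsc_plus zsc_uminus)

lemma zsc_num: "zsc (numeral (Num.Bit0 n)) x = zsc (numeral n) x + zsc (numeral n) x"
     "zsc (numeral (Num.Bit1 n)) x = zsc (numeral n) x + zsc (numeral n) x + x"
  by (simp_all only: numeral_Bit0 numeral_Bit1 zsc_add zsc_1)

lemma zsc_num1: "zsc (numeral Num.One) x = x" by simp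




definition gcomm :: "'m::ab_group_add gstr \<Rightarrow> bool" where
  "gcomm G \<longleftrightarrow> additive (act_a G) \<and> additive (q0 G) \<and> additive (q1 G) \<and> additive (q2 G) \<and>
    (\<forall>x. q0 G (act_a G x) = act_a G (act_a G (q0 G x)) - zsc 2 (act_a G (q1 G x)) + zsc 6 (q2 G x)) \<and>
    (\<forall>x. q1 G (act_a G x) = zsc 3 (q0 G x) + act_a G (q2 G x)) \<and>
    (\<forall>x. q2 G (act_a G x) = - act_a G (q0 G x) + zsc 3 (q1 G x))"

lemma gcommD:
  assumes "gcomm G"
  shows "act_a G (x + y) = act_a G x + act_a G y" "act_a G (x - y) = act_a G x - act_a G y"
    "act_a G (- x) = - act_a G x" "act_a G 0 = 0"
    "q0 G (x + y) = q0 G x + q0 G y" "q0 G (x - y) = q0 G x - q0 G y"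
    "q0 G (- x) = - q0 G x" "q0 G 0 = 0"
    "q1 G (x + y) = q1 G x + q1 G y" "q1 G (x - y) = q1 G x - q1 G y"
    "q1 G (- x) = - q1 G x" "q1 G 0 = 0"
    "q2 G (x + y) = q2 G x + q2 G y" "q2 G (x - y) = q2 G x - q2 G y"
    "q2 G (- x) = - q2 G x" "q2 G 0 = 0"
    "q0 G (act_a G x) = act_a G (act_a G (q0 G x)) - zsc 2 (act_a G (q1 G x)) + zsc 6 (q2 G x)"
    "q1 G (act_a G x) = zsc 3 (q0 G x) + act_a G (q2 G x)"
    "q2 G (act_a G x) = - act_a G (q0 G x) + zsc 3 (q1 G x)"
  using assms unfolding gcomm_def by (auto simp: additive_add additive_diff additive_neg additive_0)

lemma gmod_gcomm: "gmod G \<Longrightarrow> gcomm G" unfolding gmod_def gcomm_def by blast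

lemmas zsc_simps = zsc_num zsc_num1 zsc_plus zsc_minus zsc_uminus

definition "Bq0 M N tp x y = tp (q0 M x) (q0 N y) + zsc 2 (tp (q1 M x) (q2 N y)) + zsc 2 (tp (q2 M x) (q1 N y))"
definition "Bq1 M N AT tp x y = tp (q0 M x) (q1 N y) + tp (q1 M x) (q0 N y) + AT (tp (q1 M x) (q2 N y))
   + AT (tp (q2 M x) (q1 N y)) + zsc 2 (tp (q2 M x) (q2 N y))"
definition "Bq2 M N AT tp x y = tp (q0 M x) (q2 N y) + tp (q2 M x) (q0 N y) + tp (q1 M x) (q1 N y) + AT (tp (q2 M x) (q2 N y))"

locale pt =
  fixes M :: "'m::ab_group_add gstr" and N :: "'n::ab_group_add gstr"
    and AT :: "'t::ab_group_add \<Rightarrow> 't" and tp :: "'m \<Rightarrow> 'n \<Rightarrow> 't"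
  assumes cM: "gcomm M" and cN: "gcomm N" and aT: "additive AT"
    and tpl: "\<And>x x' y. tp (x + x') y = tp x y + tp x' y"
    and tpr: "\<And>x y y'. tp x (y + y') = tp x y + tp x y'"
    and tpA: "\<And>x y. tp (act_a M x) y = AT (tp x y)"
    and tpB: "\<And>x y. tp x (act_a N y) = AT (tp x y)"
begin

lemma addl: "additive (\<lambda>x. tp x y)" unfolding additive_def using tpl by blast
lemma addr: "additive (\<lambda>y. tp x y)" unfolding additive_def using tpr by blast

lemma tp_simps:
  "tp (x - x') y = tp x y - tp x' y" "tp (- x) y = - tp x y" "tp 0 y = 0"
  "tp x (y - y') = tp x y - tp x y'" "tp x (- y) = - tp x y" "tp x 0 = 0"
  "AT (u + v) = AT u + AT v" "AT (u - v) = AT u - AT v" "AT (- u) = - AT u" "AT 0 = 0"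
  by (rule additive_diff[OF addl] additive_neg[OF addl] additive_0[OF addl, simplified]
   additive_diff[OF addr] additive_neg[OF addr] additive_0[OF addr]
   additive_add[OF aT] additive_diff[OF aT] additive_neg[OF aT] additive_0[OF aT])+

lemmas ex = gcommD[OF cM] gcommD[OF cN] tp_simps tpl tpr tpA tpB zsc_simps

abbreviation "B0 \<equiv> Bq0 M N tp"
abbreviation "B1 \<equiv> Bq1 M N AT tp"
abbreviation "B2 \<equiv> Bq2 M N AT tp"

lemma bal0: "B0 (act_a M x) y = B0 x (act_a N y)"
  unfolding Bq0_def by (simp add: ex algebra_simps)
lemma bal1: "B1 (act_a M x) y = B1 x (act_a N y)"
  unfolding Bq1_def by (simp add: ex algebra_simps)
lemma bal2: "B2 (act_a M x) y = B2 x (act_a N y)"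
  unfolding Bq2_def by (simp add: ex algebra_simps)

end



lemma additive_sum: assumes a: "additive f" shows "f (sum g S) = (\<Sum>i\<in>S. f (g i))"
proof (cases "finite S")
  case True then show ?thesis
    by (induct S rule: finite_induct) (simp_all add: additive_0[OF a] additive_add[OF a])
next
  case False then show ?thesis using additive_0[OF a] by simp
qed

lemma zsc_sum: "zsc k (sum g S) = (\<Sum>i\<in>S. zsc k (g i))"
  by (rule additive_sum) (simp add: additive_def zsc_plus)

lemma teval_sup: assumes "finite S" "{p. s p \<noteq> 0} \<subseteq> S"
  shows "teval f s = (\<Sum>p\<in>S. zsc (s p) (f (fst p) (snd p)))"
  unfolding teval_def
  by (rule sum.mono_neutral_left) (use assms in auto)

lemma fsupp_add: "fsupp s \<Longrightarrow> fsupp t \<Longrightarrow> fsupp (\<lambda>p. s p + t p)"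
  unfolding fsupp_def by (rule finite_subset[of _ "{p. s p \<noteq> 0} \<union> {p. t p \<noteq> 0}"]) auto
lemma fsupp_neg: "fsupp s \<Longrightarrow> fsupp (\<lambda>p. - s p)"
  unfolding fsupp_def by simp
lemma fsupp_diff: "fsupp s \<Longrightarrow> fsupp t \<Longrightarrow> fsupp (\<lambda>p. s p - t p)"
  unfolding fsupp_def by (rule finite_subset[of _ "{p. s p \<noteq> 0} \<union> {p. t p \<noteq> 0}"]) auto
lemma fsupp_delta: "fsupp (\<lambda>p. delta a p)"
  unfolding fsupp_def delta_def by (rule finite_subset[of _ "{a}"]) auto
lemma fsupp_zero: "fsupp (\<lambda>p. 0)"
  unfolding fsupp_def by simp

lemma teval_add: assumes "fsupp s" "fsupp t"
  shows "teval f (\<lambda>p. s p + t p) = teval f s + teval f t"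
proof -
  let ?S = "{p. s p \<noteq> 0} \<union> {p. t p \<noteq> 0}"
  have fin: "finite ?S" using assms unfolding fsupp_def by simp
  have "teval f (\<lambda>p. s p + t p) = (\<Sum>p\<in>?S. zsc (s p + t p) (f (fst p) (snd p)))"
    by (rule teval_sup[OF fin]) auto
  also have "\<dots> = (\<Sum>p\<in>?S. zsc (s p) (f (fst p) (snd p))) + (\<Sum>p\<in>?S. zsc (t p) (f (fst p) (snd p)))"
    by (simp add: zsc_add sum.distrib)
  also have "\<dots> = teval f s + teval f t"
    using teval_sup[OF fin, of s f] teval_sup[OF fin, of t f] by auto
  finally show ?thesis .
qed

lemma teval_neg: "teval f (\<lambda>p. - s p) = - teval f s"
  unfolding teval_def by (simp add: zsc_neg sum_negf)

lemma teval_diff: assumes "fsupp s" "fsupp t"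
  shows "teval f (\<lambda>p. s p - t p) = teval f s - teval f t"
  using teval_add[OF assms(1) fsupp_neg[OF assms(2)], of f] teval_neg[of f t] by simp

lemma teval_zero: "teval f (\<lambda>p. 0) = 0" unfolding teval_def by simp

lemma teval_delta: "teval f (\<lambda>p. delta a p) = f (fst a) (snd a)"
proof -
  have "teval f (\<lambda>p. delta a p) = (\<Sum>p\<in>{a}. zsc (delta a p) (f (fst p) (snd p)))"
    by (rule teval_sup) (auto simp: delta_def)
  then show ?thesis by (simp add: delta_def)
qed

lemma teval_additive: assumes "additive g" shows "g (teval f s) = teval (\<lambda>x y. g (f x y)) s"
  unfolding teval_def by (simp add: additive_sum[OF assms] additive_zsc[OF assms])

lemma tens_rel_vanish:
  assumes "s \<in> tens_rel AM AN"
    and Bl: "\<And>x x' y. B (x + x') y = B x y + B x' y"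
    and Br: "\<And>x y y'. B x (y + y') = B x y + B x y'"
    and Bb: "\<And>x y. B (AM x) y = B x (AN y)"
  shows "fsupp s \<and> teval B s = 0"
  using assms(1)
proof induct
  case zero then show ?case by (simp add: fsupp_zero teval_zero)
next
  case (add s t) then show ?case by (simp add: fsupp_add teval_add)
next
  case (neg s) then show ?case by (simp add: fsupp_neg teval_neg)
next
  case (addl x x' y)
  have f: "fsupp (\<lambda>p. delta (x + x', y) p - delta (x, y) p)" by (intro fsupp_diff fsupp_delta)
  show ?case using teval_diff[OF f fsupp_delta, of B] teval_diff[OF fsupp_delta fsupp_delta, of B "(x+x',y)" "(x,y)"]
    by (simp add: teval_delta Bl fsupp_diff f fsupp_delta)
next
  case (addr x y y')
  have f: "fsupp (\<lambda>p. delta (x, y + y') p - delta (x, y) p)" by (intro fsupp_diff fsupp_delta)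
  show ?case using teval_diff[OF f fsupp_delta, of B] teval_diff[OF fsupp_delta fsupp_delta, of B "(x,y+y')" "(x,y)"]
    by (simp add: teval_delta Br fsupp_diff f fsupp_delta)
next
  case (bal x y)
  show ?case using teval_diff[OF fsupp_delta fsupp_delta, of B "(AM x, y)" "(x, AN y)"]
    by (simp add: teval_delta Bb fsupp_diff fsupp_delta)
qed

lemma is_tensorD:
  assumes "is_tensor AM AN AT tp"
  shows "additive AT" "\<And>x x' y. tp (x + x') y = tp x y + tp x' y"
    "\<And>x y y'. tp x (y + y') = tp x y + tp x y'"
    "\<And>x y. tp (AM x) y = AT (tp x y)" "\<And>x y. tp x (AN y) = AT (tp x y)"
    "\<And>z. \<exists>s. fsupp s \<and> z = teval tp s"
    "\<And>s. fsupp s \<Longrightarrow> (teval tp s = 0 \<longleftrightarrow> s \<in> tens_rel AM AN)"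
  using assms unfolding is_tensor_def by blast+

lemma tensor_ext:
  assumes T: "is_tensor AM AN AT tp" and f: "additive f" and g: "additive g"
    and e: "\<And>x y. f (tp x y) = g (tp x y)"
  shows "f z = g z"
proof -
  obtain s where "fsupp s" "z = teval tp s" using is_tensorD(6)[OF T] by blast
  then show ?thesis using teval_additive[OF f, of tp s] teval_additive[OF g, of tp s] e by simp
qed

lemma tensor_lift:
  assumes T: "is_tensor AM AN AT tp"
    and Bl: "\<And>x x' y. B (x + x') y = B x y + B x' y"
    and Br: "\<And>x y y'. B x (y + y') = B x y + B x y'"
    and Bb: "\<And>x y. B (AM x) y = B x (AN y)"
  shows "\<exists>h. additive h \<and> (\<forall>x y. h (tp x y) = B x y)"
proof -
  have key: "teval B s = teval B t" if "fsupp s" "fsupp t" "teval tp s = teval tp t" for s t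
  proof -
    have fd: "fsupp (\<lambda>p. s p - t p)" using that by (simp add: fsupp_diff)
    have "teval tp (\<lambda>p. s p - t p) = 0" using teval_diff[OF that(1,2), of tp] that(3) by simp
    then have "(\<lambda>p. s p - t p) \<in> tens_rel AM AN" using is_tensorD(7)[OF T fd] by simp
    then have "teval B (\<lambda>p. s p - t p) = 0" using tens_rel_vanish[OF _ Bl Br Bb] by blast
    then show ?thesis using teval_diff[OF that(1,2), of B] by simp
  qed
  define rep where "rep z = (SOME s. fsupp s \<and> z = teval tp s)" for z
  have rep: "fsupp (rep z) \<and> z = teval tp (rep z)" for z
    unfolding rep_def by (rule someI_ex[OF is_tensorD(6)[OF T]])
  define h where "h z = teval B (rep z)" for z
  have hs: "h z = teval B s" if "fsupp s" "z = teval tp s" for z s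
    unfolding h_def using key[of "rep z" s] rep[of z] that by metis
  have "additive h" unfolding additive_def
  proof (intro allI)
    fix z z'
    have "h (z + z') = teval B (\<lambda>p. rep z p + rep z' p)"
      by (rule hs) (use rep[of z] rep[of z'] in \<open>simp_all add: fsupp_add teval_add\<close>)
    then show "h (z + z') = h z + h z'" using rep[of z] rep[of z'] by (simp add: teval_add h_def)
  qed
  moreover have "h (tp x y) = B x y" for x y
    using hs[OF fsupp_delta, of "tp x y" "(x,y)"] by (simp add: teval_delta)
  ultimately show ?thesis by blast
qed




definition ademAt :: "'m::ab_group_add gstr \<Rightarrow> 'm \<Rightarrow> bool" where
  "ademAt G x \<longleftrightarrow> q1 G (q0 G x) = zsc 2 (q2 G (q1 G x)) - zsc 2 (q0 G (q2 G x)) \<and>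
     q2 G (q0 G x) = q0 G (q1 G x) + act_a G (q0 G (q2 G x)) - zsc 2 (q1 G (q2 G x))"

context pt begin

lemma comm0: "B0 (act_a M x) y = AT (AT (B0 x y)) - zsc 2 (AT (B1 x y)) + zsc 6 (B2 x y)"
  unfolding Bq0_def Bq1_def Bq2_def by (simp add: ex algebra_simps)
lemma comm1: "B1 (act_a M x) y = zsc 3 (B0 x y) + AT (B2 x y)"
  unfolding Bq0_def Bq1_def Bq2_def by (simp add: ex algebra_simps)
lemma comm2: "B2 (act_a M x) y = - AT (B0 x y) + zsc 3 (B1 x y)"
  unfolding Bq0_def Bq1_def Bq2_def by (simp add: ex algebra_simps)

end

locale pt2 = pt M N AT tp for M :: "'m::ab_group_add gstr" and N :: "'n::ab_group_add gstr"
    and AT :: "'t::ab_group_add \<Rightarrow> 't" and tp +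
  fixes T :: "'t gstr"
  assumes aTT: "act_a T = AT" and cT: "gcomm T"
    and qT0: "\<And>x y. q0 T (tp x y) = B0 x y"
    and qT1: "\<And>x y. q1 T (tp x y) = B1 x y"
    and qT2: "\<And>x y. q2 T (tp x y) = B2 x y"
begin

lemmas exT = gcommD[OF cT, unfolded aTT] qT0 qT1 qT2

lemma adem_tp: assumes "ademAt M x" "ademAt N y" shows "ademAt T (tp x y)"
proof -
  have a: "q1 M (q0 M x) = zsc 2 (q2 M (q1 M x)) - zsc 2 (q0 M (q2 M x))"
     "q2 M (q0 M x) = q0 M (q1 M x) + act_a M (q0 M (q2 M x)) - zsc 2 (q1 M (q2 M x))"
     "q1 N (q0 N y) = zsc 2 (q2 N (q1 N y)) - zsc 2 (q0 N (q2 N y))"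
     "q2 N (q0 N y) = q0 N (q1 N y) + act_a N (q0 N (q2 N y)) - zsc 2 (q1 N (q2 N y))"
    using assms unfolding ademAt_def by auto
  show ?thesis unfolding ademAt_def aTT
    by (simp add: exT a Bq0_def Bq1_def Bq2_def ex algebra_simps)
qed

lemma psi_tp: assumes "ademAt M x" "ademAt N y" shows "psi T (tp x y) = tp (psi M x) (psi N y)"
proof -
  have a: "q1 M (q0 M x) = zsc 2 (q2 M (q1 M x)) - zsc 2 (q0 M (q2 M x))"
     "q2 M (q0 M x) = q0 M (q1 M x) + act_a M (q0 M (q2 M x)) - zsc 2 (q1 M (q2 M x))"
     "q1 N (q0 N y) = zsc 2 (q2 N (q1 N y)) - zsc 2 (q0 N (q2 N y))"
     "q2 N (q0 N y) = q0 N (q1 N y) + act_a N (q0 N (q2 N y)) - zsc 2 (q1 N (q2 N y))"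
    using assms unfolding ademAt_def by auto
  show ?thesis unfolding psi_def aTT
    by (simp add: exT a Bq0_def Bq1_def Bq2_def ex algebra_simps)
qed

end



lemma gmod_ademAt: "gmod G \<Longrightarrow> ademAt G x" unfolding gmod_def ademAt_def by blast

lemma pt_of_tensor: "gcomm M \<Longrightarrow> gcomm N \<Longrightarrow> is_tensor (act_a M) (act_a N) AT tp \<Longrightarrow> pt M N AT tp"
  unfolding pt_def using is_tensorD[of "act_a M" "act_a N" AT tp] by blast

context pt begin
lemma Badd:
  "B0 (x + x') y = B0 x y + B0 x' y" "B0 x (y + y') = B0 x y + B0 x y'"
  "B1 (x + x') y = B1 x y + B1 x' y" "B1 x (y + y') = B1 x y + B1 x y'"
  "B2 (x + x') y = B2 x y + B2 x' y" "B2 x (y + y') = B2 x y + B2 x y'"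
  unfolding Bq0_def Bq1_def Bq2_def by (simp_all add: ex algebra_simps)
end

lemma gtensorD:
  assumes "gtensor M N tp T"
  shows "is_tensor (act_a M) (act_a N) (act_a T) tp" "additive (q0 T)" "additive (q1 T)" "additive (q2 T)"
   "\<And>x y. q0 T (tp x y) = Bq0 M N tp x y" "\<And>x y. q1 T (tp x y) = Bq1 M N (act_a T) tp x y"
   "\<And>x y. q2 T (tp x y) = Bq2 M N (act_a T) tp x y"
  using assms unfolding gtensor_def by (simp_all add: Bq0_def Bq1_def Bq2_def)

lemma gtensor_pt2:
  assumes cM: "gcomm M" and cN: "gcomm N" and g: "gtensor M N tp T"
  shows "pt2 M N (act_a T) tp T"
proof -
  note G = gtensorD[OF g]
  interpret pt M N "act_a T" tp by (rule pt_of_tensor[OF cM cN G(1)])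
  have aT: "additive (act_a T)" by (rule aT)
  note adds = additive_add[OF aT] additive_add[OF G(2)] additive_add[OF G(3)] additive_add[OF G(4)]
  have c0: "q0 T (act_a T z) = act_a T (act_a T (q0 T z)) - zsc 2 (act_a T (q1 T z)) + zsc 6 (q2 T z)" for z
  proof (rule tensor_ext[OF G(1), of "\<lambda>z. q0 T (act_a T z)"])
    show "additive (\<lambda>z. q0 T (act_a T z))" unfolding additive_def by (simp add: adds)
    show "additive (\<lambda>z. act_a T (act_a T (q0 T z)) - zsc 2 (act_a T (q1 T z)) + zsc 6 (q2 T z))"
      unfolding additive_def by (simp add: adds zsc_plus algebra_simps)
    show "q0 T (act_a T (tp x y)) = act_a T (act_a T (q0 T (tp x y))) - zsc 2 (act_a T (q1 T (tp x y))) + zsc 6 (q2 T (tp x y))" for x y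
      using comm0[of x y] tpA[of x y, symmetric] by (simp add: G)
  qed
  have c1: "q1 T (act_a T z) = zsc 3 (q0 T z) + act_a T (q2 T z)" for z
  proof (rule tensor_ext[OF G(1), of "\<lambda>z. q1 T (act_a T z)"])
    show "additive (\<lambda>z. q1 T (act_a T z))" unfolding additive_def by (simp add: adds)
    show "additive (\<lambda>z. zsc 3 (q0 T z) + act_a T (q2 T z))"
      unfolding additive_def by (simp add: adds zsc_plus algebra_simps)
    show "q1 T (act_a T (tp x y)) = zsc 3 (q0 T (tp x y)) + act_a T (q2 T (tp x y))" for x y
      using comm1[of x y] tpA[of x y, symmetric] by (simp add: G)
  qed
  have c2: "q2 T (act_a T z) = - act_a T (q0 T z) + zsc 3 (q1 T z)" for z
  proof (rule tensor_ext[OF G(1), of "\<lambda>z. q2 T (act_a T z)"])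
    show "additive (\<lambda>z. q2 T (act_a T z))" unfolding additive_def by (simp add: adds)
    show "additive (\<lambda>z. - act_a T (q0 T z) + zsc 3 (q1 T z))"
      unfolding additive_def by (simp add: adds zsc_plus algebra_simps)
    show "q2 T (act_a T (tp x y)) = - act_a T (q0 T (tp x y)) + zsc 3 (q1 T (tp x y))" for x y
      using comm2[of x y] tpA[of x y, symmetric] by (simp add: G)
  qed
  have "gcomm T" unfolding gcomm_def using aT G(2-4) c0 c1 c2 by blast
  then show ?thesis unfolding pt2_def pt2_axioms_def using pt_axioms G(5-7) by blast
qed

lemma gtensor_gmod:
  assumes mM: "gmod M" and mN: "gmod N" and g: "gtensor M N tp T"
  shows "gmod T"
proof -
  interpret pt2 M N "act_a T" tp T by (rule gtensor_pt2[OF gmod_gcomm[OF mM] gmod_gcomm[OF mN] g])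
  note G = gtensorD[OF g]
  have cT': "gcomm T" by (rule cT)
  have aT: "additive (act_a T)" by (rule aT)
  note adds = additive_add[OF aT] additive_add[OF G(2)] additive_add[OF G(3)] additive_add[OF G(4)]
  have at: "ademAt T (tp x y)" for x y by (rule adem_tp[OF gmod_ademAt[OF mM] gmod_ademAt[OF mN]])
  have e1: "q1 T (q0 T z) = zsc 2 (q2 T (q1 T z)) - zsc 2 (q0 T (q2 T z))" for z
  proof (rule tensor_ext[OF G(1), of "\<lambda>z. q1 T (q0 T z)"])
    show "additive (\<lambda>z. q1 T (q0 T z))" unfolding additive_def by (simp add: adds)
    show "additive (\<lambda>z. zsc 2 (q2 T (q1 T z)) - zsc 2 (q0 T (q2 T z)))"
      unfolding additive_def by (simp add: adds zsc_plus algebra_simps)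
  qed (use at in \<open>simp add: ademAt_def\<close>)
  have e2: "q2 T (q0 T z) = q0 T (q1 T z) + act_a T (q0 T (q2 T z)) - zsc 2 (q1 T (q2 T z))" for z
  proof (rule tensor_ext[OF G(1), of "\<lambda>z. q2 T (q0 T z)"])
    show "additive (\<lambda>z. q2 T (q0 T z))" unfolding additive_def by (simp add: adds)
    show "additive (\<lambda>z. q0 T (q1 T z) + act_a T (q0 T (q2 T z)) - zsc 2 (q1 T (q2 T z)))"
      unfolding additive_def by (simp add: adds zsc_plus algebra_simps)
  qed (use at in \<open>simp add: ademAt_def\<close>)
  show ?thesis using cT' e1 e2 unfolding gmod_def gcomm_def by blast
qed

lemma part1:
  assumes mM: "gmod M" and mN: "gmod N" and T: "is_tensor (act_a M) (act_a N) AT tp"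
  shows "(\<exists>!T. act_a T = AT \<and> gtensor M N tp T) \<and> (\<forall>T. act_a T = AT \<and> gtensor M N tp T \<longrightarrow> gmod T)"
proof -
  interpret pt M N AT tp by (rule pt_of_tensor[OF gmod_gcomm[OF mM] gmod_gcomm[OF mN] T])
  obtain h0 where h0: "additive h0" "\<And>x y. h0 (tp x y) = B0 x y"
    using tensor_lift[OF T, of B0] Badd bal0 by metis
  obtain h1 where h1: "additive h1" "\<And>x y. h1 (tp x y) = B1 x y"
    using tensor_lift[OF T, of B1] Badd bal1 by metis
  obtain h2 where h2: "additive h2" "\<And>x y. h2 (tp x y) = B2 x y"
    using tensor_lift[OF T, of B2] Badd bal2 by metis
  define T0 where "T0 = \<lparr>act_a = AT, q0 = h0, q1 = h1, q2 = h2\<rparr>"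
  have ex: "act_a T0 = AT \<and> gtensor M N tp T0"
    unfolding T0_def gtensor_def using T h0 h1 h2 unfolding Bq0_def Bq1_def Bq2_def by simp
  have un: "T1 = T2" if "act_a T1 = AT \<and> gtensor M N tp T1" "act_a T2 = AT \<and> gtensor M N tp T2" for T1 T2
  proof -
    note G1 = gtensorD[OF that(1)[THEN conjunct2]] and G2 = gtensorD[OF that(2)[THEN conjunct2]]
    have "q0 T1 z = q0 T2 z" for z by (rule tensor_ext[OF T G1(2) G2(2)]) (simp add: G1 G2)
    moreover have "q1 T1 z = q1 T2 z" for z by (rule tensor_ext[OF T G1(3) G2(3)]) (use that in \<open>simp add: G1 G2\<close>)
    moreover have "q2 T1 z = q2 T2 z" for z by (rule tensor_ext[OF T G1(4) G2(4)]) (use that in \<open>simp add: G1 G2\<close>)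
    ultimately show ?thesis using that by (intro gstr.equality) auto
  qed
  show ?thesis using ex un gtensor_gmod[OF mM mN] by metis
qed




lemma add_simps:
  assumes "additive f"
  shows "f (x + y) = f x + f y" "f (x - y) = f x - f y" "f (- x) = - f x" "f 0 = 0" "f (zsc k x) = zsc k (f x)"
  using additive_add[OF assms] additive_diff[OF assms] additive_neg[OF assms] additive_0[OF assms]
    additive_zsc[OF assms] by blast+

lemma tens_simps:
  assumes T: "is_tensor AM AN AT tp"
  shows "tp (x + x') y = tp x y + tp x' y" "tp (x - x') y = tp x y - tp x' y" "tp (- x) y = - tp x y"
    "tp 0 y = 0" "tp (zsc k x) y = zsc k (tp x y)"
    "tp x (y + y') = tp x y + tp x y'" "tp x (y - y') = tp x y - tp x y'" "tp x (- y) = - tp x y"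
    "tp x 0 = 0" "tp x (zsc k y) = zsc k (tp x y)"
    "tp (AM x) y = AT (tp x y)" "tp x (AN y) = AT (tp x y)"
    "AT (u + v) = AT u + AT v" "AT (u - v) = AT u - AT v" "AT (- u) = - AT u" "AT 0 = 0"
    "AT (zsc k u) = zsc k (AT u)"
proof -
  have l: "additive (\<lambda>x. tp x y)" for y unfolding additive_def using is_tensorD(2)[OF T] by blast
  have r: "additive (\<lambda>y. tp x y)" for x unfolding additive_def using is_tensorD(3)[OF T] by blast
  note a = is_tensorD(1)[OF T]
  show "tp (x + x') y = tp x y + tp x' y" "tp (x - x') y = tp x y - tp x' y" "tp (- x) y = - tp x y"
    "tp 0 y = 0" "tp (zsc k x) y = zsc k (tp x y)"
    using add_simps[OF l[of y]] by auto
  show "tp x (y + y') = tp x y + tp x y'" "tp x (y - y') = tp x y - tp x y'" "tp x (- y) = - tp x y"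
    "tp x 0 = 0" "tp x (zsc k y) = zsc k (tp x y)"
    using add_simps[OF r[of x]] by auto
  show "tp (AM x) y = AT (tp x y)" "tp x (AN y) = AT (tp x y)" using is_tensorD(4,5)[OF T] by auto
  show "AT (u + v) = AT u + AT v" "AT (u - v) = AT u - AT v" "AT (- u) = - AT u" "AT 0 = 0"
    "AT (zsc k u) = zsc k (AT u)" using add_simps[OF a] by auto
qed

lemma glinD: assumes "glin G H f"
  shows "additive f" "f (act_a G x) = act_a H (f x)" "f (q0 G x) = q0 H (f x)"
    "f (q1 G x) = q1 H (f x)" "f (q2 G x) = q2 H (f x)"
  using assms unfolding glin_def by blast+

lemma gtensor_simps:
  assumes "gtensor M N tp T"
  shows "q0 T (tp x y) = tp (q0 M x) (q0 N y) + zsc 2 (tp (q1 M x) (q2 N y)) + zsc 2 (tp (q2 M x) (q1 N y))"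
    "q1 T (tp x y) = tp (q0 M x) (q1 N y) + tp (q1 M x) (q0 N y)
                          + act_a T (tp (q1 M x) (q2 N y)) + act_a T (tp (q2 M x) (q1 N y))
                          + zsc 2 (tp (q2 M x) (q2 N y))"
    "q2 T (tp x y) = tp (q0 M x) (q2 N y) + tp (q2 M x) (q0 N y)
                          + tp (q1 M x) (q1 N y) + act_a T (tp (q2 M x) (q2 N y))"
  using assms unfolding gtensor_def by blast+

lemma part6:
  assumes "gmod M" "gmod N" "gtensor M N tp T"
  shows "psi T (tp x y) = tp (psi M x) (psi N y)"
proof -
  interpret pt2 M N "act_a T" tp T by (rule gtensor_pt2[OF gmod_gcomm[OF assms(1)] gmod_gcomm[OF assms(2)] assms(3)])
  show ?thesis by (rule psi_tp[OF gmod_ademAt[OF assms(1)] gmod_ademAt[OF assms(2)]])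
qed

lemma c: "additive f \<Longrightarrow> additive g \<Longrightarrow> additive (\<lambda>z. f (g z))"
  unfolding additive_def by simp

lemma glin_ext:
  assumes T: "gtensor M N tp T" and h: "additive h"
    and hA: "\<And>x y. h (act_a T (tp x y)) = act_a T' (h (tp x y))"
    and h0: "\<And>x y. h (q0 T (tp x y)) = q0 T' (h (tp x y))"
    and h1: "\<And>x y. h (q1 T (tp x y)) = q1 T' (h (tp x y))"
    and h2: "\<And>x y. h (q2 T (tp x y)) = q2 T' (h (tp x y))"
    and aT': "additive (act_a T')" "additive (q0 T')" "additive (q1 T')" "additive (q2 T')"
  shows "glin T T' h"
proof -
  note G = gtensorD[OF T]
  show ?thesis unfolding glin_def
    using h tensor_ext[OF G(1) c[OF h is_tensorD(1)[OF G(1)]] c[OF aT'(1) h], OF hA]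
      tensor_ext[OF G(1) c[OF h G(2)] c[OF aT'(2) h], OF h0]
      tensor_ext[OF G(1) c[OF h G(3)] c[OF aT'(3) h], OF h1]
      tensor_ext[OF G(1) c[OF h G(4)] c[OF aT'(4) h], OF h2] by blast
qed

lemma gmod_adds: assumes "gmod G"
  shows "additive (act_a G)" "additive (q0 G)" "additive (q1 G)" "additive (q2 G)"
  using assms unfolding gmod_def by blast+

lemma part2:
  assumes mM: "gmod M" and mN: "gmod N" and mM': "gmod M'" and mN': "gmod N'"
    and f: "glin M M' f" and g: "glin N N' g" and T: "gtensor M N tp T" and T': "gtensor M' N' tp' T'"
  shows "(\<exists>h. additive h \<and> (\<forall>x y. h (tp x y) = tp' (f x) (g y))) \<and>
        (\<forall>h. additive h \<and> (\<forall>x y. h (tp x y) = tp' (f x) (g y)) \<longrightarrow> glin T T' h)"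
proof -
  note G = gtensorD[OF T] and G' = gtensorD[OF T']
  note ts' = tens_simps[OF G'(1)]
  note fs = glinD[OF f] add_simps[OF glinD(1)[OF f]] and gs = glinD[OF g] add_simps[OF glinD(1)[OF g]]
  have ex: "\<exists>h. additive h \<and> (\<forall>x y. h (tp x y) = tp' (f x) (g y))"
    by (rule tensor_lift[OF G(1)]) (simp_all add: ts' fs gs)
  have gl: "glin T T' h" if h: "additive h" "\<forall>x y. h (tp x y) = tp' (f x) (g y)" for h
  proof -
    note hs = add_simps[OF h(1)]
    have hA: "h (act_a T (tp x y)) = act_a T' (h (tp x y))" for x y
      using h(2) by (simp add: tens_simps[OF G(1), symmetric] ts' fs gs)
    have hA': "h (act_a T w) = act_a T' (h w)" for w
    proof (rule tensor_ext[OF G(1), of "\<lambda>w. h (act_a T w)"])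
      show "additive (\<lambda>w. h (act_a T w))" using h(1) is_tensorD(1)[OF G(1)] unfolding additive_def by simp
      show "additive (\<lambda>w. act_a T' (h w))" using h(1) is_tensorD(1)[OF G'(1)] unfolding additive_def by simp
    qed (rule hA)
    show ?thesis
      by (rule glin_ext[OF T h(1) hA]) (use h(2) in \<open>simp_all add: gtensor_simps[OF T] gtensor_simps[OF T'] hs hA' ts' fs gs zsc_simps gmod_adds[OF mM'] gmod_adds[OF mN'] G'(2-4) is_tensorD(1)[OF G'(1)]\<close>)
  qed
  show ?thesis using ex gl by blast
qed

lemma part5:
  assumes mM: "gmod M" and mN: "gmod N" and T: "gtensor M N tp T" and S: "gtensor N M tp' S"
  shows "(\<exists>h. bij h \<and> additive h \<and> (\<forall>x y. h (tp x y) = tp' y x)) \<and>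
        (\<forall>h. additive h \<and> (\<forall>x y. h (tp x y) = tp' y x) \<longrightarrow> glin T S h)"
proof -
  note G = gtensorD[OF T] and G' = gtensorD[OF S]
  note ts = tens_simps[OF G(1)] and ts' = tens_simps[OF G'(1)]
  obtain h where h: "additive h" "\<And>x y. h (tp x y) = tp' y x"
    using tensor_lift[OF G(1), of "\<lambda>x y. tp' y x"] ts' by (metis (no_types, lifting))
  obtain k where k: "additive k" "\<And>x y. k (tp' y x) = tp x y"
    using tensor_lift[OF G'(1), of "\<lambda>y x. tp x y"] ts by (metis (no_types, lifting))
  have idd: "additive (\<lambda>z. z)" unfolding additive_def by simp
  have kh: "k (h z) = z" for z by (rule tensor_ext[OF G(1) c[OF k(1) h(1)] idd]) (simp add: h k)
  have hk: "h (k z) = z" for z by (rule tensor_ext[OF G'(1) c[OF h(1) k(1)] idd]) (simp add: h k)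
  have "bij h" by (rule o_bij[of k]) (auto simp: kh hk)
  have gl: "glin T S h'" if h': "additive h'" "\<forall>x y. h' (tp x y) = tp' y x" for h'
  proof -
    note hs = add_simps[OF h'(1)]
    have hA': "h' (act_a T w) = act_a S (h' w)" for w
    proof (rule tensor_ext[OF G(1), of "\<lambda>w. h' (act_a T w)"])
      show "additive (\<lambda>w. h' (act_a T w))" using h'(1) is_tensorD(1)[OF G(1)] unfolding additive_def by simp
      show "additive (\<lambda>w. act_a S (h' w))" using h'(1) is_tensorD(1)[OF G'(1)] unfolding additive_def by simp
      show "h' (act_a T (tp x y)) = act_a S (h' (tp x y))" for x y
        using h'(2) by (simp add: ts[symmetric] ts')
    qed
    show ?thesis
      by (rule glin_ext[OF T h'(1)]) (use h'(2) in \<open>simp_all add: gtensor_simps[OF T] gtensor_simps[OF S] hs hA' ts' zsc_simps gmod_adds[OF mM] gmod_adds[OF mN] G'(2-4) is_tensorD(1)[OF G'(1)] algebra_simps\<close>)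
  qed
  show ?thesis using \<open>bij h\<close> h gl by blast
qed




lemma tp_addl: "is_tensor AM AN AT tp \<Longrightarrow> additive (\<lambda>x. tp x y)"
  unfolding additive_def using is_tensorD(2) by blast
lemma tp_addr: "is_tensor AM AN AT tp \<Longrightarrow> additive (\<lambda>y. tp x y)"
  unfolding additive_def using is_tensorD(3) by blast
lemma add_plus: "additive f \<Longrightarrow> additive g \<Longrightarrow> additive (\<lambda>z. f z + g z)"
  unfolding additive_def by (simp add: algebra_simps)
lemma add_id: "additive (\<lambda>z. z)" unfolding additive_def by simp

lemma ext12:
  assumes T1: "is_tensor AM AN AT1 tp1" and T2: "is_tensor AT1 AP AT2 tp2"
    and f: "additive f" and g: "additive g"
    and e: "\<And>x y z. f (tp2 (tp1 x y) z) = g (tp2 (tp1 x y) z)"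
  shows "f w = g w"
proof (rule tensor_ext[OF T2 f g])
  fix t z
  show "f (tp2 t z) = g (tp2 t z)"
    by (rule tensor_ext[OF T1 c[OF f tp_addl[OF T2]] c[OF g tp_addl[OF T2]]]) (rule e)
qed

lemma ext34:
  assumes T3: "is_tensor AN AP AT3 tp3" and T4: "is_tensor AM AT3 AT4 tp4"
    and f: "additive f" and g: "additive g"
    and e: "\<And>x y z. f (tp4 x (tp3 y z)) = g (tp4 x (tp3 y z))"
  shows "f w = g w"
proof (rule tensor_ext[OF T4 f g])
  fix x t
  show "f (tp4 x t) = g (tp4 x t)"
    by (rule tensor_ext[OF T3 c[OF f tp_addr[OF T4]] c[OF g tp_addr[OF T4]]]) (rule e)
qed

lemma part3:
  assumes mM: "gmod M" and mN: "gmod N" and mP: "gmod P"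
    and T1: "gtensor M N tp1 T1" and T2: "gtensor T1 P tp2 T2"
    and T3: "gtensor N P tp3 T3" and T4: "gtensor M T3 tp4 T4"
  shows "(\<exists>h. bij h \<and> additive h \<and> (\<forall>x y z. h (tp2 (tp1 x y) z) = tp4 x (tp3 y z))) \<and>
        (\<forall>h. additive h \<and> (\<forall>x y z. h (tp2 (tp1 x y) z) = tp4 x (tp3 y z)) \<longrightarrow> glin T2 T4 h)"
proof -
  note G1 = gtensorD[OF T1] and G2 = gtensorD[OF T2] and G3 = gtensorD[OF T3] and G4 = gtensorD[OF T4]
  note ts1 = tens_simps[OF G1(1)] and ts2 = tens_simps[OF G2(1)]
    and ts3 = tens_simps[OF G3(1)] and ts4 = tens_simps[OF G4(1)]
  have "\<forall>z. \<exists>g. additive g \<and> (\<forall>x y. g (tp1 x y) = tp4 x (tp3 y z))"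
    by (intro allI tensor_lift[OF G1(1)]) (simp_all add: ts3 ts4)
  then obtain G where Ga: "\<And>z. additive (G z)" and Gt: "\<And>z x y. G z (tp1 x y) = tp4 x (tp3 y z)"
    by metis
  have Gadd: "G (z + z') t = G z t + G z' t" for z z' t
    by (rule tensor_ext[OF G1(1) Ga add_plus[OF Ga Ga]]) (simp add: Gt ts3 ts4)
  have Gbal: "G z (act_a T1 t) = G (act_a P z) t" for z t
  proof (rule tensor_ext[OF G1(1) c[OF Ga is_tensorD(1)[OF G1(1)]] Ga])
    fix x y
    have "act_a T1 (tp1 x y) = tp1 (act_a M x) y" by (simp add: ts1)
    then show "G z (act_a T1 (tp1 x y)) = G (act_a P z) (tp1 x y)" by (simp add: Gt ts3 ts4)
  qed
  obtain h where h: "additive h" "\<And>t z. h (tp2 t z) = G z t"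
    using tensor_lift[OF G2(1), of "\<lambda>t z. G z t"] add_simps[OF Ga] Gadd Gbal by metis
  have ht: "h (tp2 (tp1 x y) z) = tp4 x (tp3 y z)" for x y z by (simp add: h Gt)
  have "\<forall>x. \<exists>g. additive g \<and> (\<forall>y z. g (tp3 y z) = tp2 (tp1 x y) z)"
    by (intro allI tensor_lift[OF G3(1)]) (simp_all add: ts1 ts2)
  then obtain F where Fa: "\<And>x. additive (F x)" and Ft: "\<And>x y z. F x (tp3 y z) = tp2 (tp1 x y) z"
    by metis
  have Fadd: "F (x + x') t = F x t + F x' t" for x x' t
    by (rule tensor_ext[OF G3(1) Fa add_plus[OF Fa Fa]]) (simp add: Ft ts1 ts2)
  have Fbal: "F (act_a M x) t = F x (act_a T3 t)" for x t
  proof (rule tensor_ext[OF G3(1) Fa c[OF Fa is_tensorD(1)[OF G3(1)]]])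
    fix y z
    have "act_a T3 (tp3 y z) = tp3 (act_a N y) z" by (simp add: ts3)
    then show "F (act_a M x) (tp3 y z) = F x (act_a T3 (tp3 y z))" by (simp add: Ft ts1 ts2)
  qed
  obtain k where k: "additive k" "\<And>x t. k (tp4 x t) = F x t"
    using tensor_lift[OF G4(1), of "\<lambda>x t. F x t"] add_simps[OF Fa] Fadd Fbal by metis
  have kt: "k (tp4 x (tp3 y z)) = tp2 (tp1 x y) z" for x y z by (simp add: k Ft)
  have kh: "k (h w) = w" for w
    by (rule ext12[OF G1(1) G2(1) c[OF k(1) h(1)] add_id]) (simp add: ht kt)
  have hk: "h (k w) = w" for w
    by (rule ext34[OF G3(1) G4(1) c[OF h(1) k(1)] add_id]) (simp add: ht kt)
  have "bij h" by (rule o_bij[of k]) (auto simp: kh hk)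
  have gl: "glin T2 T4 h'" if h': "additive h'" "\<forall>x y z. h' (tp2 (tp1 x y) z) = tp4 x (tp3 y z)" for h'
  proof -
    note hs = add_simps[OF h'(1)]
    have h't: "h' (tp2 (tp1 x y) z) = tp4 x (tp3 y z)" for x y z using h'(2) by blast
    have hA: "h' (act_a T2 w) = act_a T4 (h' w)" for w
    proof (rule ext12[OF G1(1) G2(1) c[OF h'(1) is_tensorD(1)[OF G2(1)]] c[OF is_tensorD(1)[OF G4(1)] h'(1)]])
      fix x y z
      have "act_a T2 (tp2 (tp1 x y) z) = tp2 (tp1 (act_a M x) y) z" by (simp add: ts1 ts2)
      then show "h' (act_a T2 (tp2 (tp1 x y) z)) = act_a T4 (h' (tp2 (tp1 x y) z))" by (simp add: h't ts4)
    qed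
    have q0: "h' (q0 T2 w) = q0 T4 (h' w)" for w
      by (rule ext12[OF G1(1) G2(1) c[OF h'(1) G2(2)] c[OF G4(2) h'(1)]])
        (simp add: h't hs hA gtensor_simps[OF T1] gtensor_simps[OF T2] gtensor_simps[OF T3] gtensor_simps[OF T4]
           ts1 ts2 ts3 ts4 zsc_simps algebra_simps)
    have q1: "h' (q1 T2 w) = q1 T4 (h' w)" for w
      by (rule ext12[OF G1(1) G2(1) c[OF h'(1) G2(3)] c[OF G4(3) h'(1)]])
        (simp add: h't hs hA gtensor_simps[OF T1] gtensor_simps[OF T2] gtensor_simps[OF T3] gtensor_simps[OF T4]
           ts1 ts2 ts3 ts4 zsc_simps algebra_simps)
    have q2: "h' (q2 T2 w) = q2 T4 (h' w)" for w
      by (rule ext12[OF G1(1) G2(1) c[OF h'(1) G2(4)] c[OF G4(4) h'(1)]])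
        (simp add: h't hs hA gtensor_simps[OF T1] gtensor_simps[OF T2] gtensor_simps[OF T3] gtensor_simps[OF T4]
           ts1 ts2 ts3 ts4 zsc_simps algebra_simps)
    show ?thesis unfolding glin_def using h'(1) hA q0 q1 q2 by blast
  qed
  show ?thesis using \<open>bij h\<close> h(1) ht gl by blast
qed




lemma zsc_ring: "zsc k (x::'a::ring_1) = of_int k * x"
  by (induct k rule: int_induct[where k=0]) (simp_all add: zsc_succ zsc_pred algebra_simps)

lemma pCons_split: "pCons a (p::int poly) = zsc a 1 + [:0,1:] * p"
  by (simp add: zsc_ring of_int_poly)

definition stp :: "int \<Rightarrow> int poly \<times> int poly \<times> int poly \<Rightarrow> int poly \<times> int poly \<times> int poly" where
  "stp c t = ([:c:] + [:0,1:] * ([:0,1:] * fst t) - 2 * ([:0,1:] * fst (snd t)) + 6 * snd (snd t),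
              3 * fst t + [:0,1:] * snd (snd t), - ([:0,1:] * fst t) + 3 * fst (snd t))"

definition qtr :: "int poly \<Rightarrow> int poly \<times> int poly \<times> int poly" where
  "qtr r = fold_coeffs stp r (0, 0, 0)"

lemma qtr_0: "qtr 0 = (0, 0, 0)" by (simp add: qtr_def fold_coeffs_def)

lemma qtr_pCons: "qtr (pCons a p) = stp a (qtr p)"
proof (cases "p = 0 \<and> a = 0")
  case True then show ?thesis by (simp add: qtr_def fold_coeffs_def stp_def)
next
  case False
  then have "coeffs (pCons a p) = a # coeffs p" by (auto simp: cCons_def)
  then show ?thesis by (simp add: qtr_def fold_coeffs_def)
qed

definition "Q0 r = fst (qtr r)"
definition "Q1 r = fst (snd (qtr r))"
definition "Q2 r = snd (snd (qtr r))"

lemma Q_0: "Q0 0 = 0" "Q1 0 = 0" "Q2 0 = 0" by (simp_all add: Q0_def Q1_def Q2_def qtr_0)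

lemma Q_pCons:
  "Q0 (pCons a p) = [:a:] + [:0,1:] * ([:0,1:] * Q0 p) - 2 * ([:0,1:] * Q1 p) + 6 * Q2 p"
  "Q1 (pCons a p) = 3 * Q0 p + [:0,1:] * Q2 p"
  "Q2 (pCons a p) = - ([:0,1:] * Q0 p) + 3 * Q1 p"
  by (simp_all add: Q0_def Q1_def Q2_def qtr_pCons stp_def)

lemma Q_add: "Q0 (p + q) = Q0 p + Q0 q \<and> Q1 (p + q) = Q1 p + Q1 q \<and> Q2 (p + q) = Q2 p + Q2 q"
proof (induct p arbitrary: q)
  case 0 then show ?case by (simp add: Q_0)
next
  case (pCons a p)
  obtain b q' where q: "q = pCons b q'" by (cases q) auto
  show ?case using pCons(2)[of q'] unfolding q add_pCons Q_pCons by (simp add: algebra_simps)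
qed

definition "UU = \<lparr>act_a = (\<lambda>r. [:0, 1:] * r), q0 = Q0, q1 = Q1, q2 = Q2\<rparr>"

lemma X_mult: "[:0, 1:] * r = pCons 0 (r::int poly)" by simp

lemma Q_X:
  "Q0 ([:0,1:] * p) = [:0,1:] * ([:0,1:] * Q0 p) - zsc 2 ([:0,1:] * Q1 p) + zsc 6 (Q2 p)"
  "Q1 ([:0,1:] * p) = zsc 3 (Q0 p) + [:0,1:] * Q2 p"
  "Q2 ([:0,1:] * p) = - ([:0,1:] * Q0 p) + zsc 3 (Q1 p)"
proof -
  have e: "[:0,1:] * p = pCons 0 p" by (rule X_mult)
  show "Q0 ([:0,1:] * p) = [:0,1:] * ([:0,1:] * Q0 p) - zsc 2 ([:0,1:] * Q1 p) + zsc 6 (Q2 p)"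
    unfolding e Q_pCons zsc_ring by simp
  show "Q1 ([:0,1:] * p) = zsc 3 (Q0 p) + [:0,1:] * Q2 p"
    unfolding e Q_pCons zsc_ring by simp
  show "Q2 ([:0,1:] * p) = - ([:0,1:] * Q0 p) + zsc 3 (Q1 p)"
    unfolding e Q_pCons zsc_ring by simp
qed

lemma UU_gcomm: "gcomm UU"
  unfolding gcomm_def UU_def additive_def
  by (simp add: Q_add Q_pCons zsc_ring distrib_left)




locale ptu = pt M N AT tp for M :: "int poly gstr" and N :: "'n::ab_group_add gstr"
    and AT :: "'n \<Rightarrow> 'n" and tp +
  assumes aM: "act_a M = (\<lambda>r. [:0,1:] * r)" and aN: "act_a N = AT"
    and u0: "q0 M 1 = 1" and u1: "q1 M 1 = 0" and u2: "q2 M 1 = 0" and tp1: "\<And>y. tp 1 y = y"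
begin

lemma Badd_l: "additive (\<lambda>x. B0 x y)" "additive (\<lambda>x. B1 x y)" "additive (\<lambda>x. B2 x y)"
  unfolding additive_def using Badd by auto

lemma cartan: "q0 N (tp r y) = B0 r y \<and> q1 N (tp r y) = B1 r y \<and> q2 N (tp r y) = B2 r y"
proof (induct r arbitrary: y)
  case 0 then show ?case by (simp add: Bq0_def Bq1_def Bq2_def ex)
next
  case (pCons a p)
  have e: "pCons a p = zsc a 1 + act_a M p" unfolding aM by (rule pCons_split)
  have tpe: "tp (pCons a p) y = zsc a y + AT (tp p y)"
    unfolding e by (simp add: tpl tpA additive_zsc[OF addl] tp1)
  have b1: "B0 1 y = q0 N y" "B1 1 y = q1 N y" "B2 1 y = q2 N y"
    by (simp_all add: Bq0_def Bq1_def Bq2_def u0 u1 u2 tp1 ex)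
  have be: "B0 (pCons a p) y = zsc a (q0 N y) + B0 (act_a M p) y"
    "B1 (pCons a p) y = zsc a (q1 N y) + B1 (act_a M p) y"
    "B2 (pCons a p) y = zsc a (q2 N y) + B2 (act_a M p) y"
    unfolding e by (simp_all add: add_simps[OF Badd_l(1)] add_simps[OF Badd_l(2)] add_simps[OF Badd_l(3)] b1)
  have aq: "additive (q0 N)" "additive (q1 N)" "additive (q2 N)" using cN unfolding gcomm_def by auto
  note cn = gcommD[OF cN, unfolded aN]
  show ?case unfolding tpe be comm0 comm1 comm2
    using pCons(2)[of y] by (simp add: add_simps[OF aq(1)] add_simps[OF aq(2)] add_simps[OF aq(3)] cn)
qed

end

lemma adem_lin:
  assumes c: "gcomm G" and x: "ademAt G x" and y: "ademAt G y"
  shows "ademAt G (x + y)" "ademAt G (x - y)"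
proof -
  note e = x[unfolded ademAt_def] y[unfolded ademAt_def]
  show "ademAt G (x + y)" "ademAt G (x - y)" unfolding ademAt_def
    by (simp_all add: gcommD[OF c] zsc_plus zsc_minus e algebra_simps)
qed

lemma adem_zero: "gcomm G \<Longrightarrow> ademAt G 0"
  unfolding ademAt_def by (simp add: gcommD)

lemma adem_zsc:
  assumes c: "gcomm G" and x: "ademAt G x" shows "ademAt G (zsc k x)"
proof (induct k rule: int_induct[where k=0])
  case base then show ?case by (simp add: adem_zero[OF c])
next
  case (step1 i) then show ?case by (simp add: zsc_succ adem_lin[OF c _ x])
next
  case (step2 i) then show ?case by (simp add: zsc_pred adem_lin[OF c _ x])
qed

lemma Q_1: "Q0 1 = 1" "Q1 1 = 0" "Q2 1 = 0"
  using Q_pCons[of 1 0] by (simp_all add: Q_0 pCons_one)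

lemma X_times: "((*) [:0,1:] :: int poly \<Rightarrow> int poly) = pCons 0"
  by (rule ext) simp

lemma UU_pt: "pt UU UU (\<lambda>r. [:0,1:] * r) (*)"
  unfolding pt_def using UU_gcomm by (simp add: additive_def UU_def algebra_simps)

lemma UU_ptu: "ptu UU UU (\<lambda>r. [:0,1:] * r) (*)"
  unfolding ptu_def ptu_axioms_def
  by (intro conjI UU_pt) (simp_all add: UU_def Q_1 X_times)

lemma UU_pt2: "pt2 UU UU (\<lambda>r. [:0,1:] * r) (*) UU"
proof -
  interpret ptu UU UU "\<lambda>r. [:0,1:] * r" "(*)" by (rule UU_ptu)
  show ?thesis unfolding pt2_def pt2_axioms_def
    by (intro conjI UU_pt UU_gcomm allI) (use cartan in \<open>simp_all add: UU_def X_times\<close>)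
qed

lemma adem_UU_1: "ademAt UU 1"
  unfolding ademAt_def UU_def by (simp add: Q_1 Q_0)

lemma adem_UU_X: "ademAt UU [:0,1:]"
  unfolding ademAt_def UU_def by (simp add: Q_pCons Q_0 zsc_ring numeral_poly)




lemma adem_UU: "ademAt UU r"
proof (induct r)
  case 0 then show ?case by (rule adem_zero[OF UU_gcomm])
next
  case (pCons a p)
  interpret pt2 UU UU "\<lambda>r. [:0,1:] * r" "(*)" UU by (rule UU_pt2)
  have "ademAt UU ([:0,1:] * p)" by (rule adem_tp[OF adem_UU_X pCons(2)])
  then have "ademAt UU (zsc a 1 + [:0,1:] * p)"
    by (intro adem_lin(1)[OF UU_gcomm] adem_zsc[OF UU_gcomm adem_UU_1])
  then show ?case by (simp only: pCons_split[symmetric])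
qed

lemma std_unit_UU: "std_unit UU"
proof -
  have "gmod UU" using UU_gcomm adem_UU unfolding gmod_def gcomm_def ademAt_def by blast
  then show ?thesis unfolding std_unit_def by (simp add: UU_def Q_1 X_times)
qed

lemma polyact_gen:
  assumes "degree r \<le> n"
  shows "polyact A r x = (\<Sum>i\<le>n. zsc (coeff r i) ((A ^^ i) x))"
  unfolding polyact_def
  by (rule sum.mono_neutral_left) (use assms in \<open>auto simp: coeff_eq_0\<close>)

lemma polyact_0: "polyact A 0 x = 0" unfolding polyact_def by simp

lemma polyact_pCons:
  assumes A: "additive A"
  shows "polyact A (pCons a p) x = zsc a x + A (polyact A p x)"
proof -
  have "polyact A (pCons a p) x = (\<Sum>i\<le>Suc (degree p). zsc (coeff (pCons a p) i) ((A ^^ i) x))"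
    by (rule polyact_gen) (rule degree_pCons_le)
  also have "\<dots> = zsc a x + (\<Sum>i\<le>degree p. zsc (coeff p i) (A ((A ^^ i) x)))"
    by (subst sum.atMost_Suc_shift) (simp del: sum.atMost_Suc)
  also have "\<dots> = zsc a x + A (polyact A p x)"
    unfolding polyact_def by (simp add: additive_sum[OF A] additive_zsc[OF A])
  finally show ?thesis .
qed

lemma polyact_lemmas:
  assumes A: "additive A"
  shows "polyact A (r + s) x = polyact A r x + polyact A s x"
    "polyact A r (x + y) = polyact A r x + polyact A r y"
    "polyact A r (A x) = A (polyact A r x)"
    "polyact A ([:0,1:] * r) x = A (polyact A r x)"
    "polyact A 1 x = x"
proof -
  note as = add_simps[OF A]
  show "polyact A (r + s) x = polyact A r x + polyact A s x"
  proof (induct r arbitrary: s)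
    case 0 then show ?case by (simp add: polyact_0)
  next
    case (pCons a p)
    obtain b q where s: "s = pCons b q" by (cases s) auto
    show ?case unfolding s add_pCons polyact_pCons[OF A] pCons(2) by (simp add: as zsc_add algebra_simps)
  qed
  show "polyact A r (x + y) = polyact A r x + polyact A r y"
    by (induct r) (simp_all add: polyact_0 polyact_pCons[OF A] as zsc_plus algebra_simps)
  show "polyact A r (A x) = A (polyact A r x)"
    by (induct r) (simp_all add: polyact_0 polyact_pCons[OF A] as)
  show "polyact A ([:0,1:] * r) x = A (polyact A r x)"
    using polyact_pCons[OF A, of 0 r x] by (simp add: X_mult)
  show "polyact A 1 x = x"
    using polyact_pCons[OF A, of 1 0 x] by (simp add: polyact_0 as pCons_one)
qed

lemma std_unitD: assumes "std_unit U"
  shows "gmod U" "act_a U = (\<lambda>r. [:0,1:] * r)" "q0 U 1 = 1" "q1 U 1 = 0" "q2 U 1 = 0"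
  using assms unfolding std_unit_def by blast+

lemma polyact_ptu:
  assumes U: "std_unit U" and mM: "gmod M"
  shows "ptu U M (act_a M) (polyact (act_a M))"
proof -
  note ud = std_unitD[OF U]
  have A: "additive (act_a M)" using gmod_adds[OF mM] by blast
  note pl = polyact_lemmas[OF A]
  have "pt U M (act_a M) (polyact (act_a M))"
    unfolding pt_def using gmod_gcomm[OF ud(1)] gmod_gcomm[OF mM] A by (simp add: pl ud(2) polyact_pCons[OF A])
  then show ?thesis unfolding ptu_def ptu_axioms_def using ud by (simp add: pl)
qed




lemma part4:
  assumes U: "std_unit U" and mM: "gmod M" and TL: "gtensor U M tpl TL" and TR: "gtensor M U tpr TR"
  shows "(\<exists>h. bij h \<and> additive h \<and> (\<forall>r x. h (tpl r x) = polyact (act_a M) r x)) \<and>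
        (\<forall>h. additive h \<and> (\<forall>r x. h (tpl r x) = polyact (act_a M) r x) \<longrightarrow> glin TL M h) \<and>
        (\<exists>h. bij h \<and> additive h \<and> (\<forall>x r. h (tpr x r) = polyact (act_a M) r x)) \<and>
        (\<forall>h. additive h \<and> (\<forall>x r. h (tpr x r) = polyact (act_a M) r x) \<longrightarrow> glin TR M h)"
proof -
  note ud = std_unitD[OF U]
  have A: "additive (act_a M)" using gmod_adds[OF mM] by blast
  note pl = polyact_lemmas[OF A] and pc = polyact_pCons[OF A]
  interpret ptu U M "act_a M" "polyact (act_a M)" by (rule polyact_ptu[OF U mM])
  note ca = cartan[THEN conjunct1] cartan[THEN conjunct2, THEN conjunct1] cartan[THEN conjunct2, THEN conjunct2]
  note GL = gtensorD[OF TL] and GR = gtensorD[OF TR]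
  note tsL = tens_simps[OF GL(1)] and tsR = tens_simps[OF GR(1)]
  have spl: "pCons a p = zsc a 1 + act_a U p" for a p unfolding ud(2) by (rule pCons_split)
  note adM = gmod_adds[OF mM]
  obtain h where h: "additive h" "\<And>r x. h (tpl r x) = polyact (act_a M) r x"
    using tensor_lift[OF GL(1), of "polyact (act_a M)"] pl unfolding ud(2) by metis
  have tpl1: "tpl 1 (polyact (act_a M) r x) = tpl r x" for r x
  proof (induct r)
    case 0 then show ?case by (simp add: polyact_0 tsL)
  next
    case (pCons a p)
    have "tpl (pCons a p) x = zsc a (tpl 1 x) + act_a TL (tpl p x)" by (subst spl) (simp add: tsL)
    then show ?case by (simp add: pc tsL pCons)
  qed
  have kh: "tpl 1 (h w) = w" for w
    by (rule tensor_ext[OF GL(1) c[OF tp_addr[OF GL(1)] h(1)] add_id]) (simp add: h tpl1)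
  have hk: "h (tpl 1 x) = x" for x by (simp add: h pl)
  have "bij h" by (rule o_bij[of "tpl 1"]) (auto simp: kh hk)
  have glL: "glin TL M h'" if h': "additive h'" "\<forall>r x. h' (tpl r x) = polyact (act_a M) r x" for h'
  proof -
    note hs = add_simps[OF h'(1)]
    have h't: "h' (tpl r x) = polyact (act_a M) r x" for r x using h'(2) by blast
    have hA': "h' (act_a TL w) = act_a M (h' w)" for w
    proof (rule tensor_ext[OF GL(1) c[OF h'(1) is_tensorD(1)[OF GL(1)]] c[OF A h'(1)]])
      fix r x
      have "act_a TL (tpl r x) = tpl r (act_a M x)" by (simp add: tsL)
      then show "h' (act_a TL (tpl r x)) = act_a M (h' (tpl r x))" by (simp add: h't pl)
    qed
    show ?thesis
      by (rule glin_ext[OF TL h'(1)])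
        (simp_all add: hA' gtensor_simps[OF TL] hs h't ca Bq0_def Bq1_def Bq2_def zsc_simps adM)
  qed
  obtain g where g: "additive g" "\<And>x r. g (tpr x r) = polyact (act_a M) r x"
    using tensor_lift[OF GR(1), of "\<lambda>x r. polyact (act_a M) r x"] pl unfolding ud(2) by metis
  have tpr1: "tpr (polyact (act_a M) r x) 1 = tpr x r" for r x
  proof (induct r)
    case 0 then show ?case by (simp add: polyact_0 tsR)
  next
    case (pCons a p)
    have "tpr x (pCons a p) = zsc a (tpr x 1) + act_a TR (tpr x p)" by (subst spl) (simp add: tsR)
    then show ?case by (simp add: pc tsR pCons)
  qed
  have kg: "tpr (g w) 1 = w" for w
    by (rule tensor_ext[OF GR(1) c[OF tp_addl[OF GR(1)] g(1)] add_id]) (simp add: g tpr1)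
  have gk: "g (tpr x 1) = x" for x by (simp add: g pl)
  have "bij g" by (rule o_bij[of "\<lambda>x. tpr x 1"]) (auto simp: kg gk)
  have glR: "glin TR M h'" if h': "additive h'" "\<forall>x r. h' (tpr x r) = polyact (act_a M) r x" for h'
  proof -
    note hs = add_simps[OF h'(1)]
    have h't: "h' (tpr x r) = polyact (act_a M) r x" for r x using h'(2) by blast
    have hA': "h' (act_a TR w) = act_a M (h' w)" for w
    proof (rule tensor_ext[OF GR(1) c[OF h'(1) is_tensorD(1)[OF GR(1)]] c[OF A h'(1)]])
      fix x r
      have "act_a TR (tpr x r) = tpr (act_a M x) r" by (simp add: tsR)
      then show "h' (act_a TR (tpr x r)) = act_a M (h' (tpr x r))" by (simp add: h't pl)
    qed
    show ?thesis
      by (rule glin_ext[OF TR h'(1)])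
        (simp_all add: hA' gtensor_simps[OF TR] hs h't ca Bq0_def Bq1_def Bq2_def zsc_simps adM algebra_simps)
  qed
  show ?thesis using \<open>bij h\<close> h \<open>bij g\<close> g glL glR by blast
qed


theorem mainTheorem3:
  shows "
   \<comment> \<open>(1) M \<otimes>_R N carries a unique Gamma-structure given by the formulas, and it is a Gamma-module\<close>
   (\<forall>(M::'m::ab_group_add gstr) (N::'n::ab_group_add gstr) (AT::'t::ab_group_add \<Rightarrow> 't) tp.
      gmod M \<and> gmod N \<and> is_tensor (act_a M) (act_a N) AT tp \<longrightarrow>
        (\<exists>!T. act_a T = AT \<and> gtensor M N tp T) \<and>
        (\<forall>T. act_a T = AT \<and> gtensor M N tp T \<longrightarrow> gmod T)) \<and>
   \<comment> \<open>(2) functoriality of the tensor product in Gamma-linear maps\<close>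
   (\<forall>(M::'m gstr) (N::'n gstr) (T::'t gstr) tp (M'::'m2::ab_group_add gstr)
      (N'::'n2::ab_group_add gstr) (T'::'t2::ab_group_add gstr) tp' f g.
      gmod M \<and> gmod N \<and> gmod M' \<and> gmod N' \<and> glin M M' f \<and> glin N N' g \<and>
      gtensor M N tp T \<and> gtensor M' N' tp' T' \<longrightarrow>
        (\<exists>h. additive h \<and> (\<forall>x y. h (tp x y) = tp' (f x) (g y))) \<and>
        (\<forall>h. additive h \<and> (\<forall>x y. h (tp x y) = tp' (f x) (g y)) \<longrightarrow> glin T T' h)) \<and>
   \<comment> \<open>(3) the associator is a Gamma-isomorphism\<close>
   (\<forall>(M::'m gstr) (N::'n gstr) (P::'p::ab_group_add gstr) (T1::'t gstr) tp1
      (T2::'t2 gstr) tp2 (T3::'t3::ab_group_add gstr) tp3 (T4::'t4::ab_group_add gstr) tp4.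
      gmod M \<and> gmod N \<and> gmod P \<and> gtensor M N tp1 T1 \<and> gtensor T1 P tp2 T2 \<and>
      gtensor N P tp3 T3 \<and> gtensor M T3 tp4 T4 \<longrightarrow>
        (\<exists>h. bij h \<and> additive h \<and> (\<forall>x y z. h (tp2 (tp1 x y) z) = tp4 x (tp3 y z))) \<and>
        (\<forall>h. additive h \<and> (\<forall>x y z. h (tp2 (tp1 x y) z) = tp4 x (tp3 y z)) \<longrightarrow> glin T2 T4 h)) \<and>
   \<comment> \<open>(4) the unit R with its standard structure; the unitors are Gamma-isomorphisms\<close>
   (\<exists>U. std_unit U) \<and>
   (\<forall>U (M::'m gstr) (TL::'t gstr) tpl (TR::'t2 gstr) tpr.
      std_unit U \<and> gmod M \<and> gtensor U M tpl TL \<and> gtensor M U tpr TR \<longrightarrow>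
        (\<exists>h. bij h \<and> additive h \<and> (\<forall>r x. h (tpl r x) = polyact (act_a M) r x)) \<and>
        (\<forall>h. additive h \<and> (\<forall>r x. h (tpl r x) = polyact (act_a M) r x) \<longrightarrow> glin TL M h) \<and>
        (\<exists>h. bij h \<and> additive h \<and> (\<forall>x r. h (tpr x r) = polyact (act_a M) r x)) \<and>
        (\<forall>h. additive h \<and> (\<forall>x r. h (tpr x r) = polyact (act_a M) r x) \<longrightarrow> glin TR M h)) \<and>
   \<comment> \<open>(5) the symmetry is a Gamma-isomorphism\<close>
   (\<forall>(M::'m gstr) (N::'n gstr) (T::'t gstr) tp (S::'t2 gstr) tp'.
      gmod M \<and> gmod N \<and> gtensor M N tp T \<and> gtensor N M tp' S \<longrightarrow>
        (\<exists>h. bij h \<and> additive h \<and> (\<forall>x y. h (tp x y) = tp' y x)) \<and>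
        (\<forall>h. additive h \<and> (\<forall>x y. h (tp x y) = tp' y x) \<longrightarrow> glin T S h)) \<and>
   \<comment> \<open>(6) Psi is multiplicative on pure tensors\<close>
   (\<forall>(M::'m gstr) (N::'n gstr) (T::'t gstr) tp.
      gmod M \<and> gmod N \<and> gtensor M N tp T \<longrightarrow>
        (\<forall>x y. psi T (tp x y) = tp (psi M x) (psi N y)))"
  apply (intro conjI)
  subgoal using part1 by blast
  subgoal using part2 by blast
  subgoal using part3 by blast
  subgoal using std_unit_UU by blast
  subgoal using part4 by blast
  subgoal using part5 by blast
  subgoal using part6 by blast
  done

end
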